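(* Let $(\mu^{(n)})$ be an almost-Berger sequence. Then $\sec(\mu^{(n)})(e_0\wedge e_1)\to0$, $\sec(\mu^{(n)})(e_1\wedge e_2)\to4$ and $\sec(\mu^{(n)})(e_0\wedge e_2)\to0$ as $n\to+\infty$ if and only if $\mathrm{reg}(\mu^{(n)})\ge2$.
   Context: Let $X_0=\begin{pmatrix}i&0\\0&-i\end{pmatrix}$, $X_1=\begin{pmatrix}0&-1\\1&0\end{pmatrix}$, $X_2=\begin{pmatrix}0&i\\i&0\end{pmatrix}$, a basis of $\mathfrak{su}(2)$ with $[X_0,X_1]=-2X_2$, $[X_0,X_2]=2X_1$, $[X_1,X_2]=-2X_0$. For $\varepsilon,\lambda_1,\lambda_2>0$ let $g$ be the left-invariant metric on $\mathsf{SU}(2)$ with $X_0,X_1,X_2$ pairwise orthogonal and $g(X_0,X_0)=\varepsilon$, $g(X_1,X_1)=\lambda_1$, $g(X_2,X_2)=\lambda_2$; identify the orthonormal basis $X_0/\sqrt\varepsilon,X_1/\sqrt{\lambda_1},X_2/\sqrt{\lambda_2}$ with the standard basis $(e_0,e_1,e_2)$ of $\mathbb R^3$, and let $\mu$ be the corresponding bracket on $\mathbb R^3$; $\sec(\mu)(e_i\wedge e_j)$ denotes the sectional curvature of $g$ on the plane spanned by $e_i,e_j$. An almost-Berger sequence is a sequence $(\mu^{(n)})$ of such brackets, with parameters $(\varepsilon^{(n)},\lambda_1^{(n)},\lambda_2^{(n)})$, such that $\varepsilon^{(n)}\to0$, $\lambda_i^{(n)}\to1$ ($i=1,2$), and there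 is $C>0$ with $|\lambda_1^{(n)}-\lambda_2^{(n)}|\le C\varepsilon^{(n)}$ for all $n$ (equivalently, the sectional curvatures are uniformly bounded). Its regularity index is $\mathrm{reg}(\mu^{(n)})=\sup\{k\in\mathbb Z:(\varepsilon^{(n)})^{-k/2}|\lambda_1^{(n)}-\lambda_2^{(n)}|\to0\text{ as }n\to\infty\}\in\{1,2,\dots\}\cup\{+\infty\}$. *)

theory Defs
  imports Complex_Main "HOL-Library.Extended_Real"
begin

(* Vectors of R^3 are represented as functions nat => real, only the
   components 0,1,2 being relevant; e i is the standard basis vector. *)

definition std_e :: "nat \<Rightarrow> nat \<Rightarrow> real" where
  "std_e i = (\<lambda>k. if k = i then 1 else 0)"

definition inner3 :: "(nat \<Rightarrow> real) \<Rightarrow> (nat \<Rightarrow> real) \<Rightarrow> real" where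
  "inner3 x y = (\<Sum>k<3. x k * y k)"

(* structure constants of su(2) in the basis X0,X1,X2:
   [X_i,X_j] = sum_k cX i j k X_k, with [X0,X1] = -2X2, [X0,X2] = 2X1, [X1,X2] = -2X0 *)
definition cX :: "nat \<Rightarrow> nat \<Rightarrow> nat \<Rightarrow> real" where
  "cX i j k =
    (if (i,j,k) = (0,1,2) then -2 else if (i,j,k) = (1,0,2) then 2
     else if (i,j,k) = (0,2,1) then 2 else if (i,j,k) = (2,0,1) then -2
     else if (i,j,k) = (1,2,0) then -2 else if (i,j,k) = (2,1,0) then 2
     else 0)"

definition scal :: "real \<Rightarrow> real \<Rightarrow> real \<Rightarrow> nat \<Rightarrow> real" where
  "scal \<epsilon> l1 l2 i = (if i = 0 then sqrt \<epsilon> else if i = 1 then sqrt l1 else sqrt l2)"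

(* structure constants of the bracket mu in the orthonormal basis
   e_i = X_i / sqrt(g(X_i,X_i)):  mu(e_i,e_j) = sum_k (mu_const ... i j k) e_k *)
definition mu_const :: "real \<Rightarrow> real \<Rightarrow> real \<Rightarrow> nat \<Rightarrow> nat \<Rightarrow> nat \<Rightarrow> real" where
  "mu_const \<epsilon> l1 l2 i j k =
     cX i j k * scal \<epsilon> l1 l2 k / (scal \<epsilon> l1 l2 i * scal \<epsilon> l1 l2 j)"

definition brk :: "(nat \<Rightarrow> nat \<Rightarrow> nat \<Rightarrow> real) \<Rightarrow> (nat \<Rightarrow> real) \<Rightarrow> (nat \<Rightarrow> real) \<Rightarrow> nat \<Rightarrow> real" where
  "brk c x y = (\<lambda>k. \<Sum>i<3. \<Sum>j<3. x i * y j * c i j k)"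

(* Levi-Civita connection of the left-invariant metric (Koszul formula, e_i orthonormal):
   <nabla_x y, z> = 1/2 (<[x,y],z> - <[y,z],x> + <[z,x],y>) *)
definition nabla :: "(nat \<Rightarrow> nat \<Rightarrow> nat \<Rightarrow> real) \<Rightarrow> (nat \<Rightarrow> real) \<Rightarrow> (nat \<Rightarrow> real) \<Rightarrow> nat \<Rightarrow> real" where
  "nabla c x y = (\<lambda>k. (inner3 (brk c x y) (std_e k) - inner3 (brk c y (std_e k)) x
                        + inner3 (brk c (std_e k) x) y) / 2)"

definition curv :: "(nat \<Rightarrow> nat \<Rightarrow> nat \<Rightarrow> real) \<Rightarrow> (nat \<Rightarrow> real) \<Rightarrow> (nat \<Rightarrow> real) \<Rightarrow> (nat \<Rightarrow> real) \<Rightarrow> nat \<Rightarrow> real" where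
  "curv c x y z = (\<lambda>k. nabla c x (nabla c y z) k - nabla c y (nabla c x z) k
                      - nabla c (brk c x y) z k)"

(* sectional curvature of the plane e_i \<and> e_j (orthonormal): <R(e_i,e_j)e_j, e_i> *)
definition sec_plane :: "(nat \<Rightarrow> nat \<Rightarrow> nat \<Rightarrow> real) \<Rightarrow> nat \<Rightarrow> nat \<Rightarrow> real" where
  "sec_plane c i j = inner3 (curv c (std_e i) (std_e j) (std_e j)) (std_e i)"

definition almost_Berger :: "(nat \<Rightarrow> real) \<Rightarrow> (nat \<Rightarrow> real) \<Rightarrow> (nat \<Rightarrow> real) \<Rightarrow> bool" where
  "almost_Berger \<epsilon> l1 l2 \<longleftrightarrow>
     (\<forall>n. \<epsilon> n > 0 \<and> l1 n > 0 \<and> l2 n > 0) \<and>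
     \<epsilon> \<longlonglongrightarrow> 0 \<and> l1 \<longlonglongrightarrow> 1 \<and> l2 \<longlonglongrightarrow> 1 \<and>
     (\<exists>C>0. \<forall>n. \<bar>l1 n - l2 n\<bar> \<le> C * \<epsilon> n)"

definition reg_index :: "(nat \<Rightarrow> real) \<Rightarrow> (nat \<Rightarrow> real) \<Rightarrow> (nat \<Rightarrow> real) \<Rightarrow> ereal" where
  "reg_index \<epsilon> l1 l2 =
     Sup {ereal (real_of_int k) | k.
            (\<lambda>n. \<epsilon> n powr (- real_of_int k / 2) * \<bar>l1 n - l2 n\<bar>) \<longlonglongrightarrow> 0}"

end

theory Submission
  imports Defs
begin
lemma sum3: "(\<Sum>k<(3::nat). f k) = f 0 + f 1 + (f 2::real)"
  by (simp add: numeral_3_eq_3 numeral_2_eq_2)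

lemma K01a:
  assumes "a>0" "b>0" "c>0"
  shows "sec_plane (mu_const (a^2) (b^2) (c^2)) 0 1 = (a^4+b^4-3*c^4-2*a^2*b^2+2*a^2*c^2+2*b^2*c^2)/(a^2*b^2*c^2)"
  using assms
  apply (simp add: sec_plane_def curv_def nabla_def brk_def inner3_def sum3 std_e_def mu_const_def cX_def scal_def)
  apply (simp add: field_simps power2_eq_square)
  apply (simp add: algebra_simps power4_eq_xxxx)
  done

lemma K12a:
  assumes "a>0" "b>0" "c>0"
  shows "sec_plane (mu_const (a^2) (b^2) (c^2)) 1 2 = (-3*a^4+b^4+c^4+2*a^2*b^2+2*a^2*c^2-2*b^2*c^2)/(a^2*b^2*c^2)"
  using assms
  apply (simp add: sec_plane_def curv_def nabla_def brk_def inner3_def sum3 std_e_def mu_const_def cX_def scal_def)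
  apply (simp add: field_simps power2_eq_square)
  apply (simp add: algebra_simps power4_eq_xxxx)
  done

lemma K02a:
  assumes "a>0" "b>0" "c>0"
  shows "sec_plane (mu_const (a^2) (b^2) (c^2)) 0 2 = (a^4-3*b^4+c^4+2*a^2*b^2-2*a^2*c^2+2*b^2*c^2)/(a^2*b^2*c^2)"
  using assms
  apply (simp add: sec_plane_def curv_def nabla_def brk_def inner3_def sum3 std_e_def mu_const_def cX_def scal_def)
  apply (simp add: field_simps power2_eq_square)
  apply (simp add: algebra_simps power4_eq_xxxx)
  done

lemma sqrt4: "0 \<le> e \<Longrightarrow> (sqrt e)^4 = e^2"
  by (metis numeral_Bit0 power_add power2_eq_square real_sqrt_pow2)

lemma K01:
  assumes "e>0" "p>0" "q>0"
  shows "sec_plane (mu_const e p q) 0 1 = e/(p*q) - 2*(p-q)/(p*q) + ((p-q)/e)*(p+3*q)/(p*q)"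
proof -
  have "sec_plane (mu_const e p q) 0 1 = (e^2+p^2-3*q^2-2*e*p+2*e*q+2*p*q)/(e*p*q)"
    using K01a[of "sqrt e" "sqrt p" "sqrt q"] assms
    by (simp add: sqrt4)
  also have "\<dots> = e/(p*q) - 2*(p-q)/(p*q) + ((p-q)/e)*(p+3*q)/(p*q)"
    using assms by (simp add: field_simps power2_eq_square)
  finally show ?thesis .
qed

lemma K02:
  assumes "e>0" "p>0" "q>0"
  shows "sec_plane (mu_const e p q) 0 2 = e/(p*q) + 2*(p-q)/(p*q) - ((p-q)/e)*(3*p+q)/(p*q)"
proof -
  have "sec_plane (mu_const e p q) 0 2 = (e^2-3*p^2+q^2+2*e*p-2*e*q+2*p*q)/(e*p*q)"
    using K02a[of "sqrt e" "sqrt p" "sqrt q"] assms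
    by (simp add: sqrt4)
  also have "\<dots> = e/(p*q) + 2*(p-q)/(p*q) - ((p-q)/e)*(3*p+q)/(p*q)"
    using assms by (simp add: field_simps power2_eq_square)
  finally show ?thesis .
qed

lemma K12:
  assumes "e>0" "p>0" "q>0"
  shows "sec_plane (mu_const e p q) 1 2 = ((p-q)/e)*(p-q)/(p*q) - 3*e/(p*q) + 2*(p+q)/(p*q)"
proof -
  have "sec_plane (mu_const e p q) 1 2 = (-3*e^2+p^2+q^2+2*e*p+2*e*q-2*p*q)/(e*p*q)"
    using K12a[of "sqrt e" "sqrt p" "sqrt q"] assms
    by (simp add: sqrt4)
  also have "\<dots> = ((p-q)/e)*(p-q)/(p*q) - 3*e/(p*q) + 2*(p+q)/(p*q)"
    using assms by (simp add: field_simps power2_eq_square)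
  finally show ?thesis .
qed
lemma reg_iff:
  assumes pos: "\<And>n. \<epsilon> n > 0" and e0: "\<epsilon> \<longlonglongrightarrow> 0"
  shows "reg_index \<epsilon> l1 l2 \<ge> 2 \<longleftrightarrow> (\<lambda>n. (l1 n - l2 n) / \<epsilon> n) \<longlonglongrightarrow> 0"
proof
  assume r: "(\<lambda>n. (l1 n - l2 n) / \<epsilon> n) \<longlonglongrightarrow> 0"
  have "(\<lambda>n. \<epsilon> n powr (- real_of_int 2 / 2) * \<bar>l1 n - l2 n\<bar>) = (\<lambda>n. \<bar>(l1 n - l2 n) / \<epsilon> n\<bar>)"
    using pos by (auto simp: powr_neg_one abs_divide less_imp_le)
  moreover have "(\<lambda>n. \<bar>(l1 n - l2 n) / \<epsilon> n\<bar>) \<longlonglongrightarrow> 0"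
    using tendsto_rabs[OF r] by simp
  ultimately have t2: "(\<lambda>n. \<epsilon> n powr (- real_of_int 2 / 2) * \<bar>l1 n - l2 n\<bar>) \<longlonglongrightarrow> 0"
    by simp
  have "ereal (real_of_int 2) \<in> {ereal (real_of_int k) | k.
            (\<lambda>n. \<epsilon> n powr (- real_of_int k / 2) * \<bar>l1 n - l2 n\<bar>) \<longlonglongrightarrow> 0}"
    by (rule CollectI, rule exI[of _ 2], rule conjI[OF refl t2])
  then have "ereal (real_of_int 2) \<le> reg_index \<epsilon> l1 l2"
    unfolding reg_index_def by (rule Sup_upper)
  then show "reg_index \<epsilon> l1 l2 \<ge> 2" by simp
next
  assume g: "reg_index \<epsilon> l1 l2 \<ge> 2"
  obtain k where k2: "k \<ge> 2" and kl: "(\<lambda>n. \<epsilon> n powr (- real_of_int k / 2) * \<bar>l1 n - l2 n\<bar>) \<longlonglongrightarrow> 0"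
  proof (rule ccontr)
    assume nt: "\<not> thesis"
    have all1: "\<forall>k. (\<lambda>n. \<epsilon> n powr (- real_of_int k / 2) * \<bar>l1 n - l2 n\<bar>) \<longlonglongrightarrow> 0 \<longrightarrow> k \<le> 1"
    proof (intro allI impI)
      fix k assume tk: "(\<lambda>n. \<epsilon> n powr (- real_of_int k / 2) * \<bar>l1 n - l2 n\<bar>) \<longlonglongrightarrow> 0"
      show "k \<le> 1"
      proof (rule ccontr)
        assume "\<not> k \<le> 1"
        then have "k \<ge> 2" by simp
        from that[OF this tk] nt show False by blast
      qed
    qed
    have "reg_index \<epsilon> l1 l2 \<le> 1"
      unfolding reg_index_def
      apply (rule Sup_least)
      apply (erule CollectE)
      apply (erule exE)
      apply (erule conjE)
      apply (drule all1[rule_format])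
      apply simp
      done
    with g have "(2::ereal) \<le> 1" by (rule order_trans)
    then show False by simp
  qed
  have ev: "eventually (\<lambda>n. \<epsilon> n < 1) sequentially"
    using order_tendstoD(2)[OF e0, of 1] by simp
  show "(\<lambda>n. (l1 n - l2 n) / \<epsilon> n) \<longlonglongrightarrow> 0"
  proof (rule tendsto_0_le[OF kl, where K=1])
    show "\<forall>\<^sub>F n in sequentially. norm ((l1 n - l2 n) / \<epsilon> n) \<le> norm (\<epsilon> n powr (- real_of_int k / 2) * \<bar>l1 n - l2 n\<bar>) * 1"
      using ev
    proof eventually_elim
      case (elim n)
      have "\<epsilon> n powr (-1) \<le> \<epsilon> n powr (- real_of_int k / 2)"
        using elim pos[of n] k2 by (intro powr_mono') auto
      then have "1 / \<epsilon> n \<le> \<epsilon> n powr (- real_of_int k / 2)"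
        using pos[of n] by (simp add: powr_neg_one)
      then have "\<bar>l1 n - l2 n\<bar> * (1 / \<epsilon> n) \<le> \<bar>l1 n - l2 n\<bar> * \<epsilon> n powr (- real_of_int k / 2)"
        by (intro mult_left_mono) auto
      then show ?case using pos[of n] by (simp add: abs_divide abs_mult mult.commute)
    qed
  qed
qed

theorem proposition4p3:
  fixes \<epsilon> l1 l2 :: "nat \<Rightarrow> real"
  assumes "almost_Berger \<epsilon> l1 l2"
  shows "((\<lambda>n. sec_plane (mu_const (\<epsilon> n) (l1 n) (l2 n)) 0 1) \<longlonglongrightarrow> 0 \<and>
          (\<lambda>n. sec_plane (mu_const (\<epsilon> n) (l1 n) (l2 n)) 1 2) \<longlonglongrightarrow> 4 \<and>
          (\<lambda>n. sec_plane (mu_const (\<epsilon> n) (l1 n) (l2 n)) 0 2) \<longlonglongrightarrow> 0)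
         \<longleftrightarrow> reg_index \<epsilon> l1 l2 \<ge> 2"
proof -
  from assms obtain C where pos: "\<And>n. \<epsilon> n > 0 \<and> l1 n > 0 \<and> l2 n > 0"
    and e0: "\<epsilon> \<longlonglongrightarrow> 0" and p1: "l1 \<longlonglongrightarrow> 1" and q1: "l2 \<longlonglongrightarrow> 1"
    and C: "\<And>n. \<bar>l1 n - l2 n\<bar> \<le> C * \<epsilon> n"
    unfolding almost_Berger_def by blast
  define r where "r n = (l1 n - l2 n) / \<epsilon> n" for n
  have d0: "(\<lambda>n. l1 n - l2 n) \<longlonglongrightarrow> 0"
    using tendsto_diff[OF p1 q1] by simp
  have rb: "norm (r n) \<le> C" for n
    using C[of n] pos[of n] by (simp add: r_def abs_divide divide_le_eq)
  have rd: "(\<lambda>n. r n * (l1 n - l2 n)) \<longlonglongrightarrow> 0"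
  proof (rule tendsto_0_le[OF d0, where K=C])
    show "\<forall>\<^sub>F n in sequentially. norm (r n * (l1 n - l2 n)) \<le> norm (l1 n - l2 n) * C"
      using rb by (intro always_eventually allI) (metis abs_ge_zero abs_mult mult.commute mult_right_mono real_norm_def)
  qed
  have eK01: "sec_plane (mu_const (\<epsilon> n) (l1 n) (l2 n)) 0 1 = \<epsilon> n/(l1 n*l2 n) - 2*(l1 n-l2 n)/(l1 n*l2 n) + r n*(l1 n+3*l2 n)/(l1 n*l2 n)" for n
    using K01[of "\<epsilon> n" "l1 n" "l2 n"] pos[of n] by (simp add: r_def)
  have eK02: "sec_plane (mu_const (\<epsilon> n) (l1 n) (l2 n)) 0 2 = \<epsilon> n/(l1 n*l2 n) + 2*(l1 n-l2 n)/(l1 n*l2 n) - r n*(3*l1 n+l2 n)/(l1 n*l2 n)" for n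
    using K02[of "\<epsilon> n" "l1 n" "l2 n"] pos[of n] by (simp add: r_def)
  have eK12: "sec_plane (mu_const (\<epsilon> n) (l1 n) (l2 n)) 1 2 = r n*(l1 n-l2 n)/(l1 n*l2 n) - 3*\<epsilon> n/(l1 n*l2 n) + 2*(l1 n+l2 n)/(l1 n*l2 n)" for n
    using K12[of "\<epsilon> n" "l1 n" "l2 n"] pos[of n] by (simp add: r_def)
  have K12lim: "(\<lambda>n. sec_plane (mu_const (\<epsilon> n) (l1 n) (l2 n)) 1 2) \<longlonglongrightarrow> 4"
  proof -
    have "(\<lambda>n. r n*(l1 n-l2 n)/(l1 n*l2 n) - 3*\<epsilon> n/(l1 n*l2 n) + 2*(l1 n+l2 n)/(l1 n*l2 n))
        \<longlonglongrightarrow> 0/(1*1) - 3*0/(1*1) + 2*(1+1)/(1*1)"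
      by (intro tendsto_intros rd e0 p1 q1) auto
    then show ?thesis unfolding eK12 by simp
  qed
  have "(\<lambda>n. sec_plane (mu_const (\<epsilon> n) (l1 n) (l2 n)) 0 1) \<longlonglongrightarrow> 0 \<and>
          (\<lambda>n. sec_plane (mu_const (\<epsilon> n) (l1 n) (l2 n)) 1 2) \<longlonglongrightarrow> 4 \<and>
          (\<lambda>n. sec_plane (mu_const (\<epsilon> n) (l1 n) (l2 n)) 0 2) \<longlonglongrightarrow> 0
        \<longleftrightarrow> r \<longlonglongrightarrow> 0"
  proof
    assume h: "(\<lambda>n. sec_plane (mu_const (\<epsilon> n) (l1 n) (l2 n)) 0 1) \<longlonglongrightarrow> 0 \<and>
          (\<lambda>n. sec_plane (mu_const (\<epsilon> n) (l1 n) (l2 n)) 1 2) \<longlonglongrightarrow> 4 \<and>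
          (\<lambda>n. sec_plane (mu_const (\<epsilon> n) (l1 n) (l2 n)) 0 2) \<longlonglongrightarrow> 0"
    then have h1: "(\<lambda>n. sec_plane (mu_const (\<epsilon> n) (l1 n) (l2 n)) 0 1) \<longlonglongrightarrow> 0" by blast
    have req: "r n = (sec_plane (mu_const (\<epsilon> n) (l1 n) (l2 n)) 0 1 - \<epsilon> n/(l1 n*l2 n) + 2*(l1 n-l2 n)/(l1 n*l2 n)) * (l1 n*l2 n) / (l1 n+3*l2 n)" for n
    proof -
      have "l1 n + 3*l2 n > 0" "l1 n * l2 n > 0" using pos[of n] by auto
      moreover have "sec_plane (mu_const (\<epsilon> n) (l1 n) (l2 n)) 0 1 - \<epsilon> n/(l1 n*l2 n) + 2*(l1 n-l2 n)/(l1 n*l2 n) = r n * (l1 n + 3*l2 n) / (l1 n * l2 n)"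
        unfolding eK01 by (simp add: diff_divide_distrib add_divide_distrib)
      ultimately show ?thesis using pos[of n] by simp
    qed
    have "(\<lambda>n. (sec_plane (mu_const (\<epsilon> n) (l1 n) (l2 n)) 0 1 - \<epsilon> n/(l1 n*l2 n) + 2*(l1 n-l2 n)/(l1 n*l2 n)) * (l1 n*l2 n) / (l1 n+3*l2 n))
        \<longlonglongrightarrow> (0 - 0/(1*1) + 2*0/(1*1)) * (1*1) / (1+3*1)"
      by (intro tendsto_intros h1 e0 p1 q1 d0) auto
    moreover have "r = (\<lambda>n. (sec_plane (mu_const (\<epsilon> n) (l1 n) (l2 n)) 0 1 - \<epsilon> n/(l1 n*l2 n) + 2*(l1 n-l2 n)/(l1 n*l2 n)) * (l1 n*l2 n) / (l1 n+3*l2 n))"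
      by (rule ext, rule req)
    ultimately show "r \<longlonglongrightarrow> 0" by simp
  next
    assume r0: "r \<longlonglongrightarrow> 0"
    have a: "(\<lambda>n. \<epsilon> n/(l1 n*l2 n) - 2*(l1 n-l2 n)/(l1 n*l2 n) + r n*(l1 n+3*l2 n)/(l1 n*l2 n))
        \<longlonglongrightarrow> 0/(1*1) - 2*0/(1*1) + 0*(1+3*1)/(1*1)"
      by (intro tendsto_intros r0 e0 p1 q1 d0) auto
    have b: "(\<lambda>n. \<epsilon> n/(l1 n*l2 n) + 2*(l1 n-l2 n)/(l1 n*l2 n) - r n*(3*l1 n+l2 n)/(l1 n*l2 n))
        \<longlonglongrightarrow> 0/(1*1) + 2*0/(1*1) - 0*(3*1+1)/(1*1)"
      by (intro tendsto_intros r0 e0 p1 q1 d0) auto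
    show "(\<lambda>n. sec_plane (mu_const (\<epsilon> n) (l1 n) (l2 n)) 0 1) \<longlonglongrightarrow> 0 \<and>
          (\<lambda>n. sec_plane (mu_const (\<epsilon> n) (l1 n) (l2 n)) 1 2) \<longlonglongrightarrow> 4 \<and>
          (\<lambda>n. sec_plane (mu_const (\<epsilon> n) (l1 n) (l2 n)) 0 2) \<longlonglongrightarrow> 0"
      using a b K12lim unfolding eK01 eK02 by simp
  qed
  also have "\<dots> \<longleftrightarrow> reg_index \<epsilon> l1 l2 \<ge> 2"
    using reg_iff[of \<epsilon> l1 l2] pos e0 unfolding r_def[abs_def] by blast
  finally show ?thesis .
qed

end
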